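(* Let $U\in U(2)$ and $U_{\mathfrak s}=\frac12(U+U^T)$. Then the trace norm of $U_{\mathfrak s}$ (the sum of its singular values) equals $\sqrt{\operatorname{tr}[U\overline U]+2}$.
   Context: $\overline U$ is the entrywise complex conjugate of $U$. *)

theory Defs
  imports "Jordan_Normal_Form.Schur_Decomposition" "Jordan_Normal_Form.Char_Poly"
    "HOL-Computational_Algebra.Fundamental_Theorem_Algebra"
begin

definition singular_values :: "complex mat \<Rightarrow> real multiset" where
  "singular_values A = image_mset (\<lambda>z. sqrt (Re z)) (proots (char_poly (mat_adjoint A * A)))"

definition trace_norm :: "complex mat \<Rightarrow> real" where
  "trace_norm A = sum_mset (singular_values A)"

definition unitary_mat :: "complex mat \<Rightarrow> bool" where
  "unitary_mat U \<longleftrightarrow> U * mat_adjoint U = 1\<^sub>m (dim_row U) \<and> mat_adjoint U * U = 1\<^sub>m (dim_row U)"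

definition mat_trace :: "complex mat \<Rightarrow> complex" where
  "mat_trace A = (\<Sum>i<dim_row A. A $$ (i, i))"

end

theory Submission
  imports Defs
begin
lemma adj_idx: "A \<in> carrier_mat n m \<Longrightarrow> i < m \<Longrightarrow> j < n \<Longrightarrow> mat_adjoint A $$ (i,j) = conjugate (A $$ (j,i))"
  unfolding mat_adjoint_def by (simp add: mat_of_rows_def)
lemma adj_carrier: "A \<in> carrier_mat n m \<Longrightarrow> mat_adjoint A \<in> carrier_mat m n"
  unfolding mat_adjoint_def by (simp add: mat_of_rows_def)
lemma cc: "conjugate (z::complex) = cnj z" by simp
lemma mult2: assumes "A \<in> carrier_mat 2 2" "B \<in> carrier_mat 2 2" "i < 2" "j < 2"
  shows "(A * B) $$ (i,j) = A $$ (i,0) * B $$ (0,j) + A $$ (i,1) * B $$ (1,j)"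
  using assms by (simp add: scalar_prod_def numeral_2_eq_2)
lemma det1: "(A :: 'a :: comm_ring_1 mat) \<in> carrier_mat 1 1 \<Longrightarrow> det A = A $$ (0,0)"
  by (simp add: det_def sign_def)
lemma det2: assumes "(A :: 'a :: comm_ring_1 mat) \<in> carrier_mat 2 2"
  shows "det A = A $$ (0,0) * A $$ (1,1) - A $$ (0,1) * A $$ (1,0)"
proof -
  have "det A = (\<Sum>i<2. A $$ (i,0) * cofactor A i 0)"
    by (rule laplace_expansion_column[OF assms]) simp
  also have "\<dots> = A $$ (0,0) * A $$ (1,1) - A $$ (0,1) * A $$ (1,0)"
    using assms by (simp add: cofactor_def det1 mat_delete_carrier numeral_2_eq_2 mat_delete_def det1[of "mat_delete A _ _"])
  finally show ?thesis .
qed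
lemma cp2: assumes "(A :: 'a :: comm_ring_1 mat) \<in> carrier_mat 2 2"
  shows "char_poly A = [: A $$ (0,0) * A $$ (1,1) - A $$ (0,1) * A $$ (1,0), -(A $$ (0,0) + A $$ (1,1)), 1 :]"
proof -
  have C: "char_poly_matrix A \<in> carrier_mat 2 2" using assms by simp
  show ?thesis unfolding char_poly_def det2[OF C] using assms
    by (simp add: char_poly_matrix_def algebra_simps)
qed
lemma roots2:
  fixes T D :: real
  assumes "D \<ge> 0" "T \<ge> 0" "T^2 \<ge> 4*D"
  shows "sum_mset (image_mset (\<lambda>z. sqrt (Re z)) (proots [:complex_of_real D, - complex_of_real T, 1:]))
         = sqrt (T + 2 * sqrt D)"
proof -
  define s where "s = sqrt (T^2 - 4*D)"
  define r1 where "r1 = (T + s)/2"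
  define r2 where "r2 = (T - s)/2"
  have s0: "s \<ge> 0" and ss: "s^2 = T^2 - 4*D" using assms by (auto simp: s_def)
  have "s^2 \<le> T^2" using ss assms(1) by linarith
  then have sT: "s \<le> T" using assms(2) by (rule power2_le_imp_le)
  have p: "[:complex_of_real D, - complex_of_real T, 1:] = [:- of_real r1, 1:] * [:- of_real r2, 1:]"
  proof -
    have "r1 * r2 = D" unfolding r1_def r2_def using ss by (simp add: field_simps power2_eq_square)
    moreover have "r1 + r2 = T" unfolding r1_def r2_def by (simp add: field_simps)
    have "[:- complex_of_real r1, 1:] * [:- complex_of_real r2, 1:] = [:complex_of_real (r1*r2), - complex_of_real (r1+r2), 1:]"
      by simp
    then show ?thesis using \<open>r1 * r2 = D\<close> \<open>r1 + r2 = T\<close> by simp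
  qed
  have r: "proots [:complex_of_real D, - complex_of_real T, 1:] = {# of_real r1, of_real r2 #}"
    unfolding p by (subst proots_mult) auto
  have r10: "r1 \<ge> 0" "r2 \<ge> 0" using s0 sT assms unfolding r1_def r2_def by auto
  have "sqrt r1 + sqrt r2 = sqrt (T + 2 * sqrt D)"
  proof (rule real_sqrt_unique[symmetric])
    have "r1 * r2 = D" unfolding r1_def r2_def using ss by (simp add: field_simps power2_eq_square)
    then have "sqrt r1 * sqrt r2 = sqrt D" by (metis real_sqrt_mult)
    moreover have "(sqrt r1)^2 = r1" "(sqrt r2)^2 = r2" using r10 by auto
    moreover have "r1 + r2 = T" unfolding r1_def r2_def by (simp add: field_simps)
    ultimately show "(sqrt r1 + sqrt r2)^2 = T + 2 * sqrt D"
      using power2_sum[of "sqrt r1" "sqrt r2"] by (simp only: mult.assoc)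
  qed (use r10 in auto)
  then show ?thesis unfolding r by simp
qed
lemma nsq: "complex_of_real ((cmod z)^2) = z * cnj z"
  by (rule complex_norm_square)
lemma tn2:
  fixes S :: "complex mat"
  assumes S: "S \<in> carrier_mat 2 2"
  shows "trace_norm S = sqrt ((cmod (S$$(0,0)))^2 + (cmod (S$$(0,1)))^2 + (cmod (S$$(1,0)))^2
           + (cmod (S$$(1,1)))^2 + 2 * cmod (det S))"
proof -
  define p where "p = S$$(0,0)"
  define q where "q = S$$(0,1)"
  define r where "r = S$$(1,0)"
  define s where "s = S$$(1,1)"
  define M where "M = mat_adjoint S * S"
  have SA: "mat_adjoint S \<in> carrier_mat 2 2" using S by (rule adj_carrier)
  have M: "M \<in> carrier_mat 2 2" unfolding M_def using S SA by simp
  have Me: "M $$ (i,j) = cnj (S $$ (0,i)) * S $$ (0,j) + cnj (S $$ (1,i)) * S $$ (1,j)"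
    if "i < 2" "j < 2" for i j
    unfolding M_def mult2[OF SA S that] using that S by (simp add: adj_idx)
  have M00: "M$$(0,0) = cnj p * p + cnj r * r" using Me[of 0 0] by (simp add: p_def r_def)
  have M11: "M$$(1,1) = cnj q * q + cnj s * s" using Me[of 1 1] by (simp add: q_def s_def)
  have M01: "M$$(0,1) = cnj p * q + cnj r * s" using Me[of 0 1] by (simp add: p_def q_def r_def s_def)
  have M10: "M$$(1,0) = cnj q * p + cnj s * r" using Me[of 1 0] by (simp add: p_def q_def r_def s_def)
  have dS: "det S = p * s - q * r" using det2[OF S] by (simp add: p_def q_def r_def s_def)
  define x where "x = (cmod p)^2 + (cmod r)^2"
  define y where "y = (cmod q)^2 + (cmod s)^2"
  define m where "m = cmod (cnj p * q + cnj r * s)"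
  define tt where "tt = x + y"
  define dd where "dd = (cmod (det S))^2"
  have e1: "M$$(0,0) * M$$(1,1) - M$$(0,1) * M$$(1,0) = complex_of_real dd"
    unfolding dd_def nsq dS M00 M11 M01 M10 by (simp add: algebra_simps)
  have e2: "M$$(0,0) + M$$(1,1) = complex_of_real tt"
    unfolding tt_def x_def y_def of_real_add nsq M00 M11 by (simp add: algebra_simps)
  have e3: "complex_of_real dd = complex_of_real (x*y - m^2)"
    unfolding e1[symmetric] of_real_diff of_real_mult x_def y_def m_def of_real_add nsq M00 M11 M01 M10
    by (simp add: algebra_simps)
  then have dd: "dd = x*y - m^2" using of_real_eq_iff by blast
  have "tt^2 - 4*dd = (x-y)^2 + 4*m^2" unfolding dd tt_def by (simp add: power2_eq_square algebra_simps)
  then have disc: "tt^2 \<ge> 4*dd" by (smt (verit) zero_le_power2)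
  have d0: "dd \<ge> 0" and t0: "tt \<ge> 0" unfolding dd_def tt_def x_def y_def by auto
  have cp: "char_poly M = [:complex_of_real dd, - complex_of_real tt, 1:]"
    unfolding cp2[OF M] e1 e2 ..
  have "trace_norm S = sqrt (tt + 2 * sqrt dd)"
    unfolding trace_norm_def singular_values_def M_def[symmetric] cp
    by (rule roots2[OF d0 t0 disc])
  also have "sqrt dd = cmod (det S)" unfolding dd_def by simp
  finally show ?thesis unfolding tt_def x_def y_def p_def q_def r_def s_def by (simp add: add.assoc)
qed
lemma h2: assumes xy: "(x::complex)*y = 1" shows "(x - (b + x*bb)^2/4) * y = 1 - (b + x * bb) * (bb + y * b)/4"
proof -
  have "(b + x*bb)*y = b*y + (x*y)*bb" by (simp add: algebra_simps)
  then have e: "(b + x*bb)*y = bb + y*b" using xy by (simp add: mult.commute)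
  have "(x - (b + x*bb)^2/4) * y = x*y - (b + x*bb)*((b + x*bb)*y)/4"
    by (simp add: algebra_simps power2_eq_square)
  also have "\<dots> = 1 - (b + x * bb) * (bb + y * b)/4" unfolding e xy ..
  finally show ?thesis .
qed
theorem lemma3:
  fixes U :: "complex mat"
  assumes "U \<in> carrier_mat 2 2" and "unitary_mat U"
  shows "complex_of_real (trace_norm ((1/2) \<cdot>\<^sub>m (U + transpose_mat U)))
           = csqrt (mat_trace (U * map_mat cnj U) + 2)"
proof -
  note U = assms(1)
  define S where "S = (1/2) \<cdot>\<^sub>m (U + transpose_mat U)"
  define a where "a = U$$(0,0)"
  define b where "b = U$$(0,1)"
  define c where "c = U$$(1,0)"
  define d where "d = U$$(1,1)"
  have S: "S \<in> carrier_mat 2 2" unfolding S_def using U by simp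
  have S00: "S$$(0,0) = a" unfolding S_def a_def using U by simp
  have S11: "S$$(1,1) = d" unfolding S_def d_def using U by simp
  have S01: "S$$(0,1) = (b+c)/2" unfolding S_def b_def c_def using U by simp
  have S10: "S$$(1,0) = (b+c)/2" unfolding S_def b_def c_def using U by simp
  have UA: "mat_adjoint U \<in> carrier_mat 2 2" using U by (rule adj_carrier)
  have u1: "U * mat_adjoint U = 1\<^sub>m 2" and u2: "mat_adjoint U * U = 1\<^sub>m 2"
    using assms unfolding unitary_mat_def by auto
  have ue: "U$$(i,0) * cnj (U$$(j,0)) + U$$(i,1) * cnj (U$$(j,1)) = (if i = j then 1 else 0)"
    if "i < 2" "j < 2" for i j
    using arg_cong[OF u1, of "\<lambda>M. M $$ (i,j)", unfolded mult2[OF U UA that]] that U by (simp add: adj_idx)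
  have E1: "a * cnj a + b * cnj b = 1" using ue[of 0 0] by (simp add: a_def b_def)
  have E2: "c * cnj c + d * cnj d = 1" using ue[of 1 1] by (simp add: c_def d_def)
  have E3: "a * cnj c + b * cnj d = 0" using ue[of 0 1] by (simp add: a_def b_def c_def d_def)
  define \<delta> where "\<delta> = a * d - b * c"
  have E3': "cnj a * c + cnj b * d = 0" using arg_cong[OF E3, of cnj] by (simp add: mult.commute)
  have ac: "cnj a * c = - (cnj b * d)" using E3' by (simp add: eq_neg_iff_add_eq_0)
  have da: "\<delta> * cnj a = d"
  proof -
    have "\<delta> * cnj a = d * (a * cnj a) - b * (cnj a * c)" unfolding \<delta>_def by (simp add: algebra_simps)
    also have "\<dots> = d * (a * cnj a + b * cnj b)" unfolding ac by (simp add: algebra_simps)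
    finally show ?thesis using E1 by simp
  qed
  have bd: "cnj b * d = - (cnj a * c)" using E3' by (simp add: eq_neg_iff_add_eq_0 add.commute)
  have db: "\<delta> * cnj b = - c"
  proof -
    have "\<delta> * cnj b = a * (cnj b * d) - c * (b * cnj b)" unfolding \<delta>_def by (simp add: algebra_simps)
    also have "\<dots> = - c * (a * cnj a + b * cnj b)" unfolding bd by (simp add: algebra_simps)
    finally show ?thesis using E1 by simp
  qed
  have dd: "\<delta> * cnj \<delta> = 1"
  proof -
    have "(\<delta> * cnj \<delta>) * (a * cnj a + b * cnj b) = (\<delta> * cnj a) * cnj (\<delta> * cnj a) + (\<delta> * cnj b) * cnj (\<delta> * cnj b)"
      by (simp add: algebra_simps)
    also have "\<dots> = 1" unfolding da db using E2 by (simp add: add.commute)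
    finally show ?thesis using E1 by simp
  qed
  have cb: "c = - \<delta> * cnj b" using db by simp
  have detS: "det S = a * d - ((b+c)/2)^2" unfolding det2[OF S] S00 S01 S10 S11 by (simp add: power2_eq_square)
  have bc: "b - c = b + \<delta> * cnj b" using cb by simp
  have cbc: "cnj (b - c) = cnj b + cnj \<delta> * b" unfolding bc by (simp add: mult.commute)
  have cbc': "cnj (b + \<delta> * cnj b) = cnj b + cnj \<delta> * b" using cbc unfolding bc .
  have key: "det S * cnj \<delta> = complex_of_real (1 - (cmod (b - c))^2 / 4)"
  proof -
    have "det S = \<delta> - (b - c)^2/4" unfolding detS \<delta>_def by (simp add: field_simps power2_eq_square)
    then have "det S * cnj \<delta> = (\<delta> - (b - c)^2/4) * cnj \<delta>" by simp
    also have "\<dots> = 1 - (b-c) * cnj (b-c) / 4"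
      unfolding bc cbc' by (rule h2[OF dd])
    also have "\<dots> = complex_of_real (1 - (cmod (b - c))^2 / 4)"
      unfolding of_real_diff of_real_divide nsq by simp
    finally show ?thesis .
  qed
  have "complex_of_real ((cmod \<delta>)^2) = 1" unfolding nsq using dd .
  then have "(cmod \<delta>)^2 = 1" by (metis of_real_eq_1_iff)
  then have n\<delta>: "cmod \<delta> = 1" using norm_ge_zero[of \<delta>] by (auto simp: power2_eq_1_iff)
  have "complex_of_real ((cmod a)^2 + (cmod b)^2) = 1" unfolding of_real_add nsq using E1 .
  then have "(cmod a)^2 + (cmod b)^2 = 1" by (metis of_real_eq_1_iff)
  then have "(cmod b)^2 \<le> 1" using zero_le_power2[of "cmod a"] by linarith
  then have nb: "cmod b \<le> 1" using abs_square_le_1[of "cmod b"] by simp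
  have "complex_of_real ((cmod c)^2 + (cmod d)^2) = 1" unfolding of_real_add nsq using E2 .
  then have "(cmod c)^2 + (cmod d)^2 = 1" by (metis of_real_eq_1_iff)
  then have "(cmod c)^2 \<le> 1" using zero_le_power2[of "cmod d"] by linarith
  then have nc: "cmod c \<le> 1" using abs_square_le_1[of "cmod c"] by simp
  have "cmod (b - c) \<le> 2" using norm_triangle_ineq4[of b c] nb nc by linarith
  then have "(cmod (b - c))^2 \<le> 2^2" by (rule power_mono) simp
  then have pos: "1 - (cmod (b - c))^2 / 4 \<ge> 0" by simp
  have "cmod (det S) = cmod (det S * cnj \<delta>)" using n\<delta> by (simp add: norm_mult)
  also have "\<dots> = 1 - (cmod (b - c))^2 / 4" unfolding key norm_of_real using pos by (simp only: abs_of_nonneg)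
  finally have ndet: "cmod (det S) = 1 - (cmod (b - c))^2 / 4" .
  define R where "R = (cmod a)^2 + (cmod ((b+c)/2))^2 + (cmod ((b+c)/2))^2 + (cmod d)^2 + 2 * cmod (det S)"
  have tn: "trace_norm S = sqrt R" unfolding tn2[OF S] S00 S01 S10 S11 R_def ..
  have R0: "R \<ge> 0" unfolding R_def by simp
  have UC: "map_mat cnj U \<in> carrier_mat 2 2" using U by simp
  have tr: "mat_trace (U * map_mat cnj U) = a * cnj a + b * cnj c + c * cnj b + d * cnj d"
  proof -
    have lt12: "(1::nat) < 2" by simp
    have "mat_trace (U * map_mat cnj U) = (U * map_mat cnj U) $$ (0,0) + (U * map_mat cnj U) $$ (1,1)"
      unfolding mat_trace_def using U by (simp add: numeral_2_eq_2)
    also have "\<dots> = a * cnj a + b * cnj c + c * cnj b + d * cnj d"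
      unfolding mult2[OF U UC, of 0 0, simplified] mult2[OF U UC lt12 lt12]
      using U by (simp add: a_def b_def c_def d_def)
    finally show ?thesis .
  qed
  have "complex_of_real R = mat_trace (U * map_mat cnj U) + 2"
    unfolding R_def ndet tr of_real_add of_real_mult of_real_diff of_real_divide nsq
    by (simp add: field_simps)
  then show ?thesis unfolding S_def[symmetric] tn using R0 by (metis csqrt_of_real)
qed
end
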